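(* Let $\square$ be a category with $\Delta_1[\tau]^*\subset\square\subset\mathbf{Pos}$ subcategories, $\Delta_1[\tau]^*$ wide in $\square$. For a monotone function $\phi:P_1\to P_2$ between posets the following are equivalent: (1) there exists a unique morphism of presheaves $\square[\phi]:\square[P_1]\to\square[P_2]$ such that $\iota_{P_2}\circ\square[\phi]=\mathrm{ner}_\square(\phi)\circ\iota_{P_1}$, where $\iota_{P}:\square[P]\hookrightarrow\mathrm{ner}_\square P$ are the inclusions; (2) for each finite Boolean interval $I$ of $P_1$, the restriction of $\phi$ to $I$ corestricts to a monotone function $I\to J$, $J$ a Boolean interval of $P_2$, which is isomorphic in the arrow category $\mathbf{Pos}^{[1]}$ to a $\square$-morphism.
   Context: $[1]=\{0<1\}$, $[1]^n$ the product poset ($[1]^0=[0]$). $\tau:[1]^2\to[1]^2$, $\tau(x,y)=(y,x)$. $\Delta_1[\tau]^*$ is the smallest subcategory of $\mathbf{Set}$ containing all functions between $[0]$ and $[1]$ and $\tau$, and closed under Cartesian products of functions; its objects are the $[1]^n$; "wide" means $\square$ has the same objects. $\mathbf{Pos}$ is the category of posets and monotone maps. An interval in a poset $P$ is a non-empty subset $[x,z]_P=\{y:x\leq y\leq z\}$; it is a Boolean interval if it is a Boolean lattice (for finite ones: isomorphic to some $[1]^k$). A cubical set is a presheaf $\square^{op}\to\mathbf{Set}$. For a poset $P$, $\mathrm{ner}_\square P$ is the cubical set $[1]^n\mapsto\mathbf{Pos}([1]^n,P)$ (action by precomposition), and $\square[P]\subseteq\mathrm{ner}_\square P$ is the subpresheaf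 of those monotone $\theta:[1]^n\to P$ whose image lies in a Boolean interval $I$ of $P$ such that the corestriction $[1]^n\to I$ is isomorphic, under $[1]^n$ (i.e. after composing with a poset isomorphism $I\cong[1]^k$), to a $\square$-morphism. Two monotone maps $f:A\to B$, $f':A'\to B'$ are isomorphic in $\mathbf{Pos}^{[1]}$ if there are poset isomorphisms $A\cong A'$, $B\cong B'$ intertwining them. *)

theory Defs
  imports "HOL-Library.FuncSet"
begin

section \<open>Cubes [1]^n as boolean lists of length n, ordered pointwise\<close>

definition cube :: "nat \<Rightarrow> bool list set" where
  "cube n = {xs. length xs = n}"

definition cle :: "bool list \<Rightarrow> bool list \<Rightarrow> bool" where
  "cle xs ys \<longleftrightarrow> list_all2 (\<le>) xs ys"

definition cmono :: "nat \<Rightarrow> (bool list \<Rightarrow> bool list) \<Rightarrow> bool" where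
  "cmono m f \<longleftrightarrow> (\<forall>x\<in>cube m. \<forall>y\<in>cube m. cle x y \<longrightarrow> cle (f x) (f y))"

definition tau :: "bool list \<Rightarrow> bool list" where
  "tau xs = [xs ! 1, xs ! 0]"

definition cprod :: "nat \<Rightarrow> (bool list \<Rightarrow> bool list) \<Rightarrow> (bool list \<Rightarrow> bool list)
    \<Rightarrow> bool list \<Rightarrow> bool list" where
  "cprod a f g xs = f (take a xs) @ g (drop a xs)"

text \<open>The category Delta_1[tau]^*: D m n f means f is a morphism [1]^m -> [1]^n
  (functions are identified when they agree on [1]^m).\<close>
inductive D1tau :: "nat \<Rightarrow> nat \<Rightarrow> (bool list \<Rightarrow> bool list) \<Rightarrow> bool" where
  gen: "i \<le> 1 \<Longrightarrow> j \<le> 1 \<Longrightarrow> f ` cube i \<subseteq> cube j \<Longrightarrow> cmono i f \<Longrightarrow> D1tau i j f"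
| swap: "D1tau 2 2 tau"
| ident: "D1tau n n id"
| comp: "D1tau a b f \<Longrightarrow> D1tau b c g \<Longrightarrow> D1tau a c (g \<circ> f)"
| prod: "D1tau a b f \<Longrightarrow> D1tau c d g \<Longrightarrow> D1tau (a + c) (b + d) (cprod a f g)"
| ext: "D1tau m n f \<Longrightarrow> (\<forall>x\<in>cube m. f x = g x) \<Longrightarrow> D1tau m n g"

text \<open>A cube category: a subcategory of Pos on the objects [1]^n containing D1tau.\<close>
definition cube_cat :: "(nat \<Rightarrow> nat \<Rightarrow> (bool list \<Rightarrow> bool list) \<Rightarrow> bool) \<Rightarrow> bool" where
  "cube_cat Sq \<longleftrightarrow>
     (\<forall>m n f. Sq m n f \<longrightarrow> f ` cube m \<subseteq> cube n \<and> cmono m f)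
   \<and> (\<forall>n. Sq n n id)
   \<and> (\<forall>a b c f g. Sq a b f \<longrightarrow> Sq b c g \<longrightarrow> Sq a c (g \<circ> f))
   \<and> (\<forall>m n f g. Sq m n f \<longrightarrow> (\<forall>x\<in>cube m. f x = g x) \<longrightarrow> Sq m n g)
   \<and> (\<forall>m n f. D1tau m n f \<longrightarrow> Sq m n f)"

definition order_iso_cube :: "('a::order \<Rightarrow> bool list) \<Rightarrow> 'a set \<Rightarrow> nat \<Rightarrow> bool" where
  "order_iso_cube h A k \<longleftrightarrow> bij_betw h A (cube k) \<and>
     (\<forall>x\<in>A. \<forall>y\<in>A. x \<le> y \<longleftrightarrow> cle (h x) (h y))"

definition is_interval :: "'a::order set \<Rightarrow> bool" where
  "is_interval I \<longleftrightarrow> (\<exists>x z. x \<le> z \<and> I = {x..z})"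

definition fin_bool_interval :: "'a::order set \<Rightarrow> bool" where
  "fin_bool_interval I \<longleftrightarrow> is_interval I \<and> (\<exists>k h. order_iso_cube h I k)"

text \<open>n-cells of ner P: monotone maps [1]^n -> P, as extensional functions on cube n.\<close>
definition ner :: "nat \<Rightarrow> (bool list \<Rightarrow> 'a::order) set" where
  "ner n = {\<theta>. \<theta> \<in> extensional (cube n) \<and>
     (\<forall>x\<in>cube n. \<forall>y\<in>cube n. cle x y \<longrightarrow> \<theta> x \<le> \<theta> y)}"

definition act :: "nat \<Rightarrow> (bool list \<Rightarrow> bool list) \<Rightarrow> (bool list \<Rightarrow> 'a) \<Rightarrow> bool list \<Rightarrow> 'a" where
  "act m f \<theta> = restrict (\<theta> \<circ> f) (cube m)"

definition sqP :: "(nat \<Rightarrow> nat \<Rightarrow> (bool list \<Rightarrow> bool list) \<Rightarrow> bool) \<Rightarrow> nat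
    \<Rightarrow> (bool list \<Rightarrow> 'a::order) set" where
  "sqP Sq n = {\<theta>. \<theta> \<in> ner n \<and>
     (\<exists>I. fin_bool_interval I \<and> \<theta> ` cube n \<subseteq> I \<and>
        (\<exists>k h. order_iso_cube h I k \<and> Sq n k (h \<circ> \<theta>)))}"

definition psh_morph :: "(nat \<Rightarrow> nat \<Rightarrow> (bool list \<Rightarrow> bool list) \<Rightarrow> bool)
    \<Rightarrow> (nat \<Rightarrow> (bool list \<Rightarrow> 'a::order) \<Rightarrow> (bool list \<Rightarrow> 'b::order)) \<Rightarrow> bool" where
  "psh_morph Sq F \<longleftrightarrow>
     (\<forall>n. \<forall>\<theta>\<in>sqP Sq n. F n \<theta> \<in> sqP Sq n)
   \<and> (\<forall>m n f. \<forall>\<theta>\<in>sqP Sq n. Sq m n f \<longrightarrow> F m (act m f \<theta>) = act m f (F n \<theta>))"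

text \<open>iota_{P2} o F = ner(phi) o iota_{P1}.\<close>
definition lifts :: "(nat \<Rightarrow> nat \<Rightarrow> (bool list \<Rightarrow> bool list) \<Rightarrow> bool) \<Rightarrow> ('a::order \<Rightarrow> 'b::order)
    \<Rightarrow> (nat \<Rightarrow> (bool list \<Rightarrow> 'a) \<Rightarrow> (bool list \<Rightarrow> 'b)) \<Rightarrow> bool" where
  "lifts Sq \<phi> F \<longleftrightarrow> (\<forall>n. \<forall>\<theta>\<in>sqP Sq n. F n \<theta> = restrict (\<phi> \<circ> \<theta>) (cube n))"

end

theory Submission
  imports Defs "HOL-Combinatorics.Permutations"
begin

definition sw :: "nat \<Rightarrow> nat \<Rightarrow> bool list \<Rightarrow> bool list" where
  "sw a b x = x[a := x!b, b := x!a]"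

lemma sw_len[simp]: "length (sw a b x) = length x"
  by (simp add: sw_def)

lemma sw_nth: "a < length x \<Longrightarrow> b < length x \<Longrightarrow> i < length x \<Longrightarrow>
   sw a b x ! i = x ! (Transposition.transpose a b i)"
  by (auto simp: sw_def nth_list_update transpose_def)

lemma sw_cube: "x \<in> cube k \<Longrightarrow> sw a b x \<in> cube k"
  by (simp add: cube_def)

lemma D1_ext: "D1tau m n f \<Longrightarrow> (\<And>x. x \<in> cube m \<Longrightarrow> f x = g x) \<Longrightarrow> D1tau m n g"
  using D1tau.ext by blast

lemma sw_adj: assumes "Suc i < k" shows "D1tau k k (sw i (Suc i))"
proof -
  have a: "D1tau (i + (2 + (k - i - 2))) (i + (2 + (k - i - 2))) (cprod i id (cprod 2 tau id))"
    by (intro D1tau.prod D1tau.ident D1tau.swap)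
  have e: "i + (2 + (k - i - 2)) = k" using assms by simp
  show ?thesis
  proof (rule D1_ext[OF a[unfolded e]])
    fix x assume x: "x \<in> cube k"
    hence lx: "length x = k" by (simp add: cube_def)
    show "cprod i id (cprod 2 tau id) x = sw i (Suc i) x"
    proof (rule nth_equalityI)
      show "length (cprod i id (cprod 2 tau id) x) = length (sw i (Suc i) x)"
        using assms lx by (simp add: cprod_def tau_def)
    next
      fix j assume j: "j < length (cprod i id (cprod 2 tau id) x)"
      hence jk: "j < k" using assms lx by (simp add: cprod_def tau_def)
      show "cprod i id (cprod 2 tau id) x ! j = sw i (Suc i) x ! j"
        using assms lx jk
        apply (auto simp: cprod_def tau_def sw_nth nth_append transpose_def min_def
             nth_Cons' numeral_2_eq_2)
        apply (subgoal_tac "Suc (Suc (j - Suc (Suc 0))) = j", simp, arith)+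
        done
    qed
  qed
qed

lemma sw_lt: "a < b \<Longrightarrow> b < k \<Longrightarrow> D1tau k k (sw a b)"
proof (induction b)
  case 0 then show ?case by simp
next
  case (Suc c)
  show ?case
  proof (cases "a = c")
    case True then show ?thesis using sw_adj Suc by simp
  next
    case False
    hence ac: "a < c" using Suc by simp
    have c1: "D1tau k k (sw c (Suc c))" using sw_adj Suc by simp
    have "D1tau k k (sw c (Suc c) \<circ> (sw a c \<circ> sw c (Suc c)))"
      using Suc ac c1 by (intro D1tau.comp) auto
    then show ?thesis
    proof (rule D1_ext)
      fix x assume x: "x \<in> cube k"
      hence lx: "length x = k" by (simp add: cube_def)
      show "(sw c (Suc c) \<circ> (sw a c \<circ> sw c (Suc c))) x = sw a (Suc c) x"
        by (rule nth_equalityI) (use lx Suc ac in \<open>auto simp: sw_nth transpose_def\<close>)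
    qed
  qed
qed

lemma sw_D: "a < k \<Longrightarrow> b < k \<Longrightarrow> D1tau k k (sw a b)"
proof -
  assume a: "a < k" and b: "b < k"
  consider "a < b" | "a = b" | "b < a" by linarith
  then show ?thesis
  proof cases
    case 1 then show ?thesis using sw_lt b by blast
  next
    case 2
    show ?thesis
      by (rule D1_ext[OF D1tau.ident]) (use 2 in \<open>simp add: sw_def\<close>)
  next
    case 3
    show ?thesis
    proof (rule D1_ext[OF sw_lt[OF 3 a]])
      fix x assume "x \<in> cube k"
      hence lx: "length x = k" by (simp add: cube_def)
      show "sw b a x = sw a b x"
        by (rule nth_equalityI) (use lx a b in \<open>auto simp: sw_nth transpose_def\<close>)
    qed
  qed
qed

lemma perm_D:
  assumes "p permutes {0..<k}"
  shows "\<forall>g. (\<forall>x\<in>cube k. g x \<in> cube k \<and> (\<forall>j<k. g x ! p j = x ! j)) \<longrightarrow> D1tau k k g"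
  using assms finite_atLeastLessThan[of 0 k]
proof (induction rule: permutes_induct)
  case id
  show ?case
  proof (intro allI impI)
    fix g assume g: "\<forall>x\<in>cube k. g x \<in> cube k \<and> (\<forall>j<k. g x ! id j = x ! j)"
    show "D1tau k k g"
    proof (rule D1_ext[OF D1tau.ident])
      fix x assume x: "x \<in> cube k"
      show "id x = g x"
        by (rule nth_equalityI) (use g x in \<open>auto simp: cube_def\<close>)
    qed
  qed
next
  case (swap a b p)
  show ?case
  proof (intro allI impI)
    fix g assume g: "\<forall>x\<in>cube k. g x \<in> cube k \<and> (\<forall>j<k. g x ! (Transposition.transpose a b \<circ> p) j = x ! j)"
    have ak: "a < k" "b < k" using swap by auto
    have pk: "j < k \<Longrightarrow> p j < k" for j using swap(4) permutes_in_image by fastforce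
    have "D1tau k k (sw a b \<circ> g)"
    proof (rule swap.IH[rule_format], intro ballI conjI allI impI)
      fix x assume x: "x \<in> cube k"
      show "(sw a b \<circ> g) x \<in> cube k" using g x sw_cube by auto
      fix j assume j: "j < k"
      have lg: "length (g x) = k" using g x by (auto simp: cube_def)
      show "(sw a b \<circ> g) x ! p j = x ! j"
        using g x j pk[OF j] ak lg by (simp add: sw_nth)
    qed
    hence "D1tau k k (sw a b \<circ> (sw a b \<circ> g))"
      by (rule D1tau.comp[OF _ sw_D[OF ak]])
    then show "D1tau k k g"
    proof (rule D1_ext)
      fix x assume x: "x \<in> cube k"
      have lg: "length (g x) = k" using g x by (auto simp: cube_def)
      show "(sw a b \<circ> (sw a b \<circ> g)) x = g x"
        by (rule nth_equalityI) (use lg ak in \<open>auto simp: sw_nth transpose_def\<close>)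
    qed
  qed
qed

lemma cle_nth: "cle x y \<longleftrightarrow> length x = length y \<and> (\<forall>i<length x. x ! i \<longrightarrow> y ! i)"
  by (auto simp: cle_def list_all2_conv_all_nth le_bool_def)

definition ev :: "nat \<Rightarrow> nat \<Rightarrow> bool list" where
  "ev k j = (replicate k False)[j := True]"

lemma ev_cube: "ev k j \<in> cube k" by (simp add: ev_def cube_def)

lemma ev_nth: "i < k \<Longrightarrow> ev k j ! i = (i = j)"
  by (cases "j < k") (auto simp: ev_def nth_list_update)

lemma ev_cle: "x \<in> cube k \<Longrightarrow> j < k \<Longrightarrow> cle (ev k j) x \<longleftrightarrow> x ! j"
  by (auto simp: cle_nth ev_def cube_def nth_list_update)

lemma ev_inj: "i < k \<Longrightarrow> j < k \<Longrightarrow> ev k i = ev k j \<Longrightarrow> i = j"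
  by (metis ev_nth)

lemma cube_card: "card (cube k) = 2 ^ k"
proof -
  have "cube k = {xs. set xs \<subseteq> (UNIV::bool set) \<and> length xs = k}" by (simp add: cube_def)
  then show ?thesis using card_lists_length_eq[of "UNIV::bool set" k] by simp
qed

lemma cube_bij_eq: "bij_betw g (cube k) (cube m) \<Longrightarrow> k = m"
proof -
  assume "bij_betw g (cube k) (cube m)"
  hence "card (cube k) = card (cube m)" by (rule bij_betw_same_card)
  hence "(2::nat) ^ k = 2 ^ m" by (simp add: cube_card)
  then show ?thesis by simp
qed

lemma auto_D:
  assumes bij: "bij_betw g (cube k) (cube k)"
    and ord: "\<forall>x\<in>cube k. \<forall>y\<in>cube k. cle x y \<longleftrightarrow> cle (g x) (g y)"
  shows "D1tau k k g"
proof -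
  define bot where "bot = replicate k False"
  have botc: "bot \<in> cube k" by (simp add: bot_def cube_def)
  have botle: "x \<in> cube k \<Longrightarrow> cle bot x" for x by (auto simp: bot_def cle_nth cube_def)
  have gc: "x \<in> cube k \<Longrightarrow> g x \<in> cube k" for x using bij bij_betwE by blast
  have inj: "x \<in> cube k \<Longrightarrow> y \<in> cube k \<Longrightarrow> g x = g y \<Longrightarrow> x = y" for x y
    using bij_betw_imp_inj_on[OF bij] by (rule inj_onD)
  have surj: "y \<in> cube k \<Longrightarrow> \<exists>x\<in>cube k. g x = y" for y
    using bij_betw_imp_surj_on[OF bij] by (metis imageE)
  have gbot: "g bot = bot"
  proof -
    obtain y where y: "y \<in> cube k" "g y = bot" using surj[OF botc] by blast
    have "cle (g bot) bot" using ord botc y botle by metis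
    then show ?thesis using gc[OF botc] unfolding bot_def
      by (intro nth_equalityI) (auto simp: cle_nth cube_def)
  qed
  define atom where "atom a \<longleftrightarrow> a \<in> cube k \<and> a \<noteq> bot \<and> (\<forall>y\<in>cube k. cle y a \<longrightarrow> y = bot \<or> y = a)" for a
  have atom_ev: "atom a \<Longrightarrow> \<exists>j<k. a = ev k j" for a
  proof -
    assume at: "atom a"
    hence la: "length a = k" "a \<noteq> bot" by (auto simp: atom_def cube_def)
    have "\<exists>j<k. a ! j"
    proof (rule ccontr)
      assume "\<not> (\<exists>j<k. a ! j)"
      hence "a = bot" unfolding bot_def using la by (intro nth_equalityI) auto
      then show False using la by simp
    qed
    then obtain j where j: "j < k" "a ! j" by blast
    have "cle (ev k j) a" using ev_cle at j by (auto simp: atom_def)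
    hence "ev k j = bot \<or> ev k j = a" using at ev_cube by (auto simp: atom_def)
    moreover have "ev k j \<noteq> bot" using j ev_nth[of j k j] by (auto simp: bot_def)
    ultimately show ?thesis using j by auto
  qed
  have ev_atom: "j < k \<Longrightarrow> atom (ev k j)" for j
  proof -
    assume j: "j < k"
    have "ev k j \<noteq> bot" using j ev_nth[of j k j] by (auto simp: bot_def)
    moreover have "y = bot \<or> y = ev k j" if y: "y \<in> cube k" "cle y (ev k j)" for y
    proof (cases "y ! j")
      case True
      hence "cle (ev k j) y" using ev_cle y j by auto
      have "y = ev k j"
        by (rule nth_equalityI) (use y \<open>cle (ev k j) y\<close> in \<open>auto simp: cle_nth\<close>)
      then show ?thesis by simp
    next
      case False
      then show ?thesis using y unfolding bot_def
        by (intro disjI1 nth_equalityI) (auto simp: cle_nth cube_def ev_nth)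
    qed
    ultimately show ?thesis using ev_cube by (auto simp: atom_def)
  qed
  have gatom: "atom a \<Longrightarrow> atom (g a)" for a
  proof -
    assume at: "atom a"
    have ac: "a \<in> cube k" using at by (simp add: atom_def)
    have "g a \<noteq> bot" using at gbot inj[OF ac botc] by (auto simp: atom_def)
    moreover have "y = bot \<or> y = g a" if y: "y \<in> cube k" "cle y (g a)" for y
    proof -
      obtain z where z: "z \<in> cube k" "g z = y" using surj[OF y(1)] by blast
      have "cle z a" using ord z y ac by metis
      hence "z = bot \<or> z = a" using at z by (auto simp: atom_def)
      then show ?thesis using z gbot by auto
    qed
    ultimately show ?thesis using gc[OF ac] by (auto simp: atom_def)
  qed
  define s where "s j = (if j < k then (SOME i. i < k \<and> g (ev k j) = ev k i) else j)" for j
  have s: "j < k \<Longrightarrow> s j < k \<and> g (ev k j) = ev k (s j)" for j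
  proof -
    assume j: "j < k"
    have "\<exists>i. i < k \<and> g (ev k j) = ev k i" using atom_ev[OF gatom[OF ev_atom[OF j]]] by blast
    from someI_ex[OF this] show ?thesis using j unfolding s_def by simp
  qed
  have sinj: "inj_on s {0..<k}"
  proof (rule inj_onI)
    fix i j assume ij: "i \<in> {0..<k}" "j \<in> {0..<k}" "s i = s j"
    hence "g (ev k i) = g (ev k j)" using s by auto
    hence "ev k i = ev k j" using inj ev_cube by blast
    then show "i = j" using ev_inj ij by auto
  qed
  have simg: "s ` {0..<k} = {0..<k}"
    using s sinj by (intro endo_inj_surj) auto
  have sperm: "s permutes {0..<k}"
    by (rule bij_imp_permutes) (use sinj simg in \<open>auto simp: bij_betw_def s_def\<close>)
  have key: "\<forall>x\<in>cube k. g x \<in> cube k \<and> (\<forall>j<k. g x ! s j = x ! j)"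
  proof (intro ballI conjI allI impI)
    fix x assume x: "x \<in> cube k"
    show "g x \<in> cube k" using gc x .
    fix j assume j: "j < k"
    have "x ! j \<longleftrightarrow> cle (ev k j) x" using ev_cle x j by simp
    also have "\<dots> \<longleftrightarrow> cle (g (ev k j)) (g x)" using ord x ev_cube by blast
    also have "\<dots> \<longleftrightarrow> g x ! s j" using s[OF j] ev_cle gc[OF x] by simp
    finally show "g x ! s j = x ! j" by simp
  qed
  show ?thesis using spec[OF perm_D[OF sperm], of g] key by (rule mp)
qed

lemma iso_auto:
  assumes h: "order_iso_cube h I k" and a: "order_iso_cube \<alpha> I m"
  shows "k = m \<and> D1tau k k (\<alpha> \<circ> inv_into I h)"
proof -
  have hb: "bij_betw h I (cube k)" and ho: "\<forall>x\<in>I. \<forall>y\<in>I. x \<le> y \<longleftrightarrow> cle (h x) (h y)"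
    using h by (auto simp: order_iso_cube_def)
  have ab: "bij_betw \<alpha> I (cube m)" and ao: "\<forall>x\<in>I. \<forall>y\<in>I. x \<le> y \<longleftrightarrow> cle (\<alpha> x) (\<alpha> y)"
    using a by (auto simp: order_iso_cube_def)
  have ib: "bij_betw (inv_into I h) (cube k) I" using hb by (rule bij_betw_inv_into)
  have gb: "bij_betw (\<alpha> \<circ> inv_into I h) (cube k) (cube m)" using ib ab by (rule bij_betw_trans)
  have km: "k = m" using gb by (rule cube_bij_eq)
  have hi: "y \<in> cube k \<Longrightarrow> h (inv_into I h y) = y" for y
    using hb by (simp add: bij_betw_def f_inv_into_f)
  have iI: "y \<in> cube k \<Longrightarrow> inv_into I h y \<in> I" for y
    using ib bij_betwE by blast
  have ord: "\<forall>x\<in>cube k. \<forall>y\<in>cube k. cle x y \<longleftrightarrow> cle ((\<alpha> \<circ> inv_into I h) x) ((\<alpha> \<circ> inv_into I h) y)"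
  proof (intro ballI)
    fix x y assume x: "x \<in> cube k" and y: "y \<in> cube k"
    have "cle x y \<longleftrightarrow> cle (h (inv_into I h x)) (h (inv_into I h y))" using hi x y by simp
    also have "\<dots> \<longleftrightarrow> inv_into I h x \<le> inv_into I h y" using ho iI x y by blast
    also have "\<dots> \<longleftrightarrow> cle (\<alpha> (inv_into I h x)) (\<alpha> (inv_into I h y))" using ao iI x y by blast
    finally show "cle x y \<longleftrightarrow> cle ((\<alpha> \<circ> inv_into I h) x) ((\<alpha> \<circ> inv_into I h) y)" by simp
  qed
  have "D1tau k k (\<alpha> \<circ> inv_into I h)" using auto_D gb[folded km] ord by blast
  with km show ?thesis by simp
qed

theorem mainTheorem13:
  fixes Sq :: "nat \<Rightarrow> nat \<Rightarrow> (bool list \<Rightarrow> bool list) \<Rightarrow> bool"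
    and \<phi> :: "'a::order \<Rightarrow> 'b::order"
  assumes "cube_cat Sq"
    and "mono \<phi>"
  shows "((\<exists>F :: nat \<Rightarrow> (bool list \<Rightarrow> 'a) \<Rightarrow> (bool list \<Rightarrow> 'b).
              psh_morph Sq F \<and> lifts Sq \<phi> F)
          \<and> (\<forall>F G :: nat \<Rightarrow> (bool list \<Rightarrow> 'a) \<Rightarrow> (bool list \<Rightarrow> 'b).
              psh_morph Sq F \<and> lifts Sq \<phi> F \<longrightarrow> psh_morph Sq G \<and> lifts Sq \<phi> G \<longrightarrow>
              (\<forall>n. \<forall>\<theta>\<in>sqP Sq n. F n \<theta> = G n \<theta>)))
     \<longleftrightarrow>
     (\<forall>I :: 'a set. fin_bool_interval I \<longrightarrow>
        (\<exists>J :: 'b set. fin_bool_interval J \<and> \<phi> ` I \<subseteq> J \<and>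
           (\<exists>m n f \<alpha> \<beta>. Sq m n f \<and> order_iso_cube \<alpha> I m \<and> order_iso_cube \<beta> J n \<and>
              (\<forall>x\<in>I. \<beta> (\<phi> x) = f (\<alpha> x)))))"
proof -
  have Sq_cube: "\<And>m n f. Sq m n f \<Longrightarrow> f ` cube m \<subseteq> cube n"
    and Sq_id: "\<And>n. Sq n n id"
    and Sq_comp: "\<And>a b c f g. Sq a b f \<Longrightarrow> Sq b c g \<Longrightarrow> Sq a c (g \<circ> f)"
    and Sq_ext: "\<And>m n f g. Sq m n f \<Longrightarrow> (\<forall>x\<in>cube m. f x = g x) \<Longrightarrow> Sq m n g"
    and Sq_D: "\<And>m n f. D1tau m n f \<Longrightarrow> Sq m n f"
    using assms(1) unfolding cube_cat_def by blast+
  define F0 :: "nat \<Rightarrow> (bool list \<Rightarrow> 'a) \<Rightarrow> (bool list \<Rightarrow> 'b)"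
    where "F0 = (\<lambda>n \<theta>. restrict (\<phi> \<circ> \<theta>) (cube n))"
  have l0: "lifts Sq \<phi> F0" by (simp add: lifts_def F0_def)
  have nat0: "\<forall>m n f. \<forall>\<theta>\<in>sqP Sq n. Sq m n f \<longrightarrow> F0 m (act m f \<theta>) = act m f (F0 n \<theta>)"
  proof (intro allI ballI impI)
    fix m n f and \<theta> :: "bool list \<Rightarrow> 'a" assume "Sq m n f"
    hence fc: "f ` cube m \<subseteq> cube n" by (rule Sq_cube)
    show "F0 m (act m f \<theta>) = act m f (F0 n \<theta>)"
      unfolding F0_def act_def
    proof (rule restrict_ext)
      fix x assume "x \<in> cube m"
      then show "(\<phi> \<circ> restrict (\<theta> \<circ> f) (cube m)) x =
          (restrict (\<phi> \<circ> \<theta>) (cube n) \<circ> f) x"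
        using fc by auto
    qed
  qed
  have uniq: "\<forall>F G :: nat \<Rightarrow> (bool list \<Rightarrow> 'a) \<Rightarrow> (bool list \<Rightarrow> 'b).
              psh_morph Sq F \<and> lifts Sq \<phi> F \<longrightarrow> psh_morph Sq G \<and> lifts Sq \<phi> G \<longrightarrow>
              (\<forall>n. \<forall>\<theta>\<in>sqP Sq n. F n \<theta> = G n \<theta>)"
    by (simp add: lifts_def)
  have lhs: "(\<exists>F :: nat \<Rightarrow> (bool list \<Rightarrow> 'a) \<Rightarrow> (bool list \<Rightarrow> 'b).
              psh_morph Sq F \<and> lifts Sq \<phi> F) \<longleftrightarrow> (\<forall>n. \<forall>\<theta>\<in>sqP Sq n. F0 n \<theta> \<in> sqP Sq n)"
  proof
    assume "\<exists>F :: nat \<Rightarrow> (bool list \<Rightarrow> 'a) \<Rightarrow> (bool list \<Rightarrow> 'b). psh_morph Sq F \<and> lifts Sq \<phi> F"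
    then obtain F :: "nat \<Rightarrow> (bool list \<Rightarrow> 'a) \<Rightarrow> (bool list \<Rightarrow> 'b)"
      where F: "psh_morph Sq F" "lifts Sq \<phi> F" by blast
    show "\<forall>n. \<forall>\<theta>\<in>sqP Sq n. F0 n \<theta> \<in> sqP Sq n"
      using F by (simp add: psh_morph_def lifts_def F0_def)
  next
    assume "\<forall>n. \<forall>\<theta>\<in>sqP Sq n. F0 n \<theta> \<in> sqP Sq n"
    hence "psh_morph Sq F0" using nat0 by (simp add: psh_morph_def)
    with l0 show "\<exists>F :: nat \<Rightarrow> (bool list \<Rightarrow> 'a) \<Rightarrow> (bool list \<Rightarrow> 'b). psh_morph Sq F \<and> lifts Sq \<phi> F"
      by blast
  qed
  have main: "(\<forall>n. \<forall>\<theta>\<in>sqP Sq n. F0 n \<theta> \<in> sqP Sq n) \<longleftrightarrow>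
     (\<forall>I :: 'a set. fin_bool_interval I \<longrightarrow>
        (\<exists>J :: 'b set. fin_bool_interval J \<and> \<phi> ` I \<subseteq> J \<and>
           (\<exists>m n f \<alpha> \<beta>. Sq m n f \<and> order_iso_cube \<alpha> I m \<and> order_iso_cube \<beta> J n \<and>
              (\<forall>x\<in>I. \<beta> (\<phi> x) = f (\<alpha> x)))))"
  proof
    assume cl: "\<forall>n. \<forall>\<theta>\<in>sqP Sq n. F0 n \<theta> \<in> sqP Sq n"
    show "\<forall>I :: 'a set. fin_bool_interval I \<longrightarrow>
        (\<exists>J :: 'b set. fin_bool_interval J \<and> \<phi> ` I \<subseteq> J \<and>
           (\<exists>m n f \<alpha> \<beta>. Sq m n f \<and> order_iso_cube \<alpha> I m \<and> order_iso_cube \<beta> J n \<and>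
              (\<forall>x\<in>I. \<beta> (\<phi> x) = f (\<alpha> x))))"
    proof (intro allI impI)
      fix I :: "'a set" assume I: "fin_bool_interval I"
      then obtain k \<alpha>0 where a0: "order_iso_cube \<alpha>0 I k" by (auto simp: fin_bool_interval_def)
      have ab: "bij_betw \<alpha>0 I (cube k)" and ao: "\<forall>x\<in>I. \<forall>y\<in>I. x \<le> y \<longleftrightarrow> cle (\<alpha>0 x) (\<alpha>0 y)"
        using a0 by (auto simp: order_iso_cube_def)
      have ib: "bij_betw (inv_into I \<alpha>0) (cube k) I" using ab by (rule bij_betw_inv_into)
      have hi: "y \<in> cube k \<Longrightarrow> \<alpha>0 (inv_into I \<alpha>0 y) = y" for y
        using ab by (simp add: bij_betw_def f_inv_into_f)
      have iI: "y \<in> cube k \<Longrightarrow> inv_into I \<alpha>0 y \<in> I" for y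
        using ib bij_betwE by blast
      have ii: "x \<in> I \<Longrightarrow> inv_into I \<alpha>0 (\<alpha>0 x) = x" for x
        using ab by (simp add: bij_betw_def inv_into_f_f)
      have ac: "x \<in> I \<Longrightarrow> \<alpha>0 x \<in> cube k" for x using ab bij_betwE by blast
      define \<theta> where "\<theta> = restrict (inv_into I \<alpha>0) (cube k)"
      have tner: "\<theta> \<in> ner k"
        unfolding ner_def
      proof (intro CollectI conjI ballI impI)
        show "\<theta> \<in> extensional (cube k)" by (simp add: \<theta>_def)
        fix x y assume x: "x \<in> cube k" and y: "y \<in> cube k" and xy: "cle x y"
        have "cle (\<alpha>0 (inv_into I \<alpha>0 x)) (\<alpha>0 (inv_into I \<alpha>0 y))" using hi x y xy by simp
        hence "inv_into I \<alpha>0 x \<le> inv_into I \<alpha>0 y" using ao iI x y by blast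
        then show "\<theta> x \<le> \<theta> y" using x y by (simp add: \<theta>_def)
      qed
      have timg: "\<theta> ` cube k \<subseteq> I" using iI by (auto simp: \<theta>_def)
      have tSq: "Sq k k (\<alpha>0 \<circ> \<theta>)"
        using Sq_ext[OF Sq_id[of k], of "\<alpha>0 \<circ> \<theta>"] hi by (simp add: \<theta>_def)
      have tsq: "\<theta> \<in> sqP Sq k"
        unfolding sqP_def using tner I timg a0 tSq
        by (intro CollectI conjI exI[of _ I] exI[of _ k] exI[of _ \<alpha>0])
      have "F0 k \<theta> \<in> sqP Sq k" using cl tsq by blast
      then obtain J n \<beta> where J: "fin_bool_interval J" "F0 k \<theta> ` cube k \<subseteq> J"
        "order_iso_cube \<beta> J n" "Sq k n (\<beta> \<circ> F0 k \<theta>)"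
        unfolding sqP_def by blast
      have F0a: "x \<in> I \<Longrightarrow> F0 k \<theta> (\<alpha>0 x) = \<phi> x" for x
        using ac ii by (simp add: F0_def \<theta>_def)
      have "\<phi> ` I \<subseteq> J"
      proof
        fix y assume "y \<in> \<phi> ` I"
        then obtain x where x: "x \<in> I" "y = \<phi> x" by blast
        have "F0 k \<theta> (\<alpha>0 x) \<in> J" using J(2) ac[OF x(1)] by blast
        then show "y \<in> J" using F0a x by simp
      qed
      moreover have "\<forall>x\<in>I. \<beta> (\<phi> x) = (\<beta> \<circ> F0 k \<theta>) (\<alpha>0 x)" using F0a by simp
      ultimately show "\<exists>J :: 'b set. fin_bool_interval J \<and> \<phi> ` I \<subseteq> J \<and>
           (\<exists>m n f \<alpha> \<beta>. Sq m n f \<and> order_iso_cube \<alpha> I m \<and> order_iso_cube \<beta> J n \<and>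
              (\<forall>x\<in>I. \<beta> (\<phi> x) = f (\<alpha> x)))"
        using J a0
        by (intro exI[of _ J] conjI exI[of _ k] exI[of _ n] exI[of _ "\<beta> \<circ> F0 k \<theta>"]
            exI[of _ \<alpha>0] exI[of _ \<beta>])
    qed
  next
    assume R: "\<forall>I :: 'a set. fin_bool_interval I \<longrightarrow>
        (\<exists>J :: 'b set. fin_bool_interval J \<and> \<phi> ` I \<subseteq> J \<and>
           (\<exists>m n f \<alpha> \<beta>. Sq m n f \<and> order_iso_cube \<alpha> I m \<and> order_iso_cube \<beta> J n \<and>
              (\<forall>x\<in>I. \<beta> (\<phi> x) = f (\<alpha> x))))"
    show "\<forall>n. \<forall>\<theta>\<in>sqP Sq n. F0 n \<theta> \<in> sqP Sq n"
    proof (intro allI ballI)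
      fix n and \<theta> :: "bool list \<Rightarrow> 'a" assume t: "\<theta> \<in> sqP Sq n"
      have t': "\<theta> \<in> ner n \<and> (\<exists>I. fin_bool_interval I \<and> \<theta> ` cube n \<subseteq> I \<and>
          (\<exists>k h. order_iso_cube h I k \<and> Sq n k (h \<circ> \<theta>)))" using t by (simp add: sqP_def)
      then obtain I k h where tn: "\<theta> \<in> ner n" and I: "fin_bool_interval I" "\<theta> ` cube n \<subseteq> I"
        "order_iso_cube h I k" "Sq n k (h \<circ> \<theta>)"
        by (elim conjE exE)
      obtain J m n' f \<alpha> \<beta> where J: "fin_bool_interval J" "\<phi> ` I \<subseteq> J" "Sq m n' f"
        "order_iso_cube \<alpha> I m" "order_iso_cube \<beta> J n'" "\<forall>x\<in>I. \<beta> (\<phi> x) = f (\<alpha> x)"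
        using mp[OF spec[OF R, of I] I(1)] by (elim conjE exE)
      have ia: "k = m \<and> D1tau k k (\<alpha> \<circ> inv_into I h)" using iso_auto[OF I(3) J(4)] .
      hence gS: "Sq k k (\<alpha> \<circ> inv_into I h)" using Sq_D by blast
      have fS: "Sq k n' f" using J(3) ia by simp
      have c: "Sq n n' (f \<circ> ((\<alpha> \<circ> inv_into I h) \<circ> (h \<circ> \<theta>)))"
        using Sq_comp[OF Sq_comp[OF I(4) gS] fS] .
      have hinj: "inj_on h I" using I(3) by (simp add: order_iso_cube_def bij_betw_def)
      have tI: "x \<in> cube n \<Longrightarrow> \<theta> x \<in> I" for x using I(2) by blast
      have "Sq n n' (\<beta> \<circ> F0 n \<theta>)"
      proof (rule Sq_ext[OF c], intro ballI)
        fix x assume x: "x \<in> cube n"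
        have "inv_into I h (h (\<theta> x)) = \<theta> x" using hinj tI[OF x] by (rule inv_into_f_f)
        then show "(f \<circ> ((\<alpha> \<circ> inv_into I h) \<circ> (h \<circ> \<theta>))) x = (\<beta> \<circ> F0 n \<theta>) x"
          using J(6) tI[OF x] x by (simp add: F0_def)
      qed
      moreover have "F0 n \<theta> \<in> ner n"
        unfolding ner_def
      proof (intro CollectI conjI ballI impI)
        show "F0 n \<theta> \<in> extensional (cube n)" by (simp add: F0_def)
        fix x y assume x: "x \<in> cube n" and y: "y \<in> cube n" and xy: "cle x y"
        have "\<theta> x \<le> \<theta> y" using tn x y xy by (simp add: ner_def)
        hence "\<phi> (\<theta> x) \<le> \<phi> (\<theta> y)" by (rule monoD[OF assms(2)])
        then show "F0 n \<theta> x \<le> F0 n \<theta> y" using x y by (simp add: F0_def)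
      qed
      moreover have "F0 n \<theta> ` cube n \<subseteq> J" using J(2) tI by (auto simp: F0_def)
      ultimately show "F0 n \<theta> \<in> sqP Sq n"
        unfolding sqP_def using J(1) J(5)
        by (intro CollectI conjI exI[of _ J] exI[of _ n'] exI[of _ \<beta>])
    qed
  qed
  have lm: "(\<exists>F :: nat \<Rightarrow> (bool list \<Rightarrow> 'a) \<Rightarrow> (bool list \<Rightarrow> 'b).
              psh_morph Sq F \<and> lifts Sq \<phi> F) \<longleftrightarrow>
     (\<forall>I :: 'a set. fin_bool_interval I \<longrightarrow>
        (\<exists>J :: 'b set. fin_bool_interval J \<and> \<phi> ` I \<subseteq> J \<and>
           (\<exists>m n f \<alpha> \<beta>. Sq m n f \<and> order_iso_cube \<alpha> I m \<and> order_iso_cube \<beta> J n \<and>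
              (\<forall>x\<in>I. \<beta> (\<phi> x) = f (\<alpha> x)))))"
    using lhs main by (rule trans)
  show ?thesis
    apply (rule iffI)
     apply (rule lm[THEN iffD1], erule conjunct1)
    apply (rule conjI, erule lm[THEN iffD2], rule uniq)
    done
qed

end
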